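(* Let $R(3,k)$ be the least $n$ such that every graph on $n$ vertices contains a triangle or an independent set of size $k$. Then: (1) If $\alpha(G)/\overline\alpha_G(1)\ge 4/3$ for every (nonempty) triangle-free graph $G$, then $R(3,k)\le(3/4+o(1))k^2/\log k$. (2) If there is a function $\eta(d)\to0$ as $d\to\infty$ such that every triangle-free graph $G$ of minimum degree $d$ satisfies $\alpha(G)/\overline\alpha_G(1)\ge 2-\eta(d)$, then $R(3,k)\le(1/2+o(1))k^2/\log k$. (3) If for every $\epsilon>0$ there exists $\lambda>0$ such that every (nonempty) triangle-free graph $G$ satisfies $\alpha(G)/\overline\alpha_G(\lambda)\ge 2-\epsilon$, then $R(3,k)\le(1/2+o(1))k^2/\log k$. Here $o(1)$ tends to $0$ as $k\to\infty$.
   Context: $\alpha(G)$ is the maximum size of an independent set of $G$. For $\lambda>0$, $\overline\alpha_G(\lambda)=\lambda P_G'(\lambda)/P_G(\lambda)$ with $P_G(\lambda)=\sum_J\lambda^{|J|}$ over all independent sets $J$ of $G$; this is the expected size of an independent set drawn from the hard-core model $\Pr[J]=\lambda^{|J|}/P_G(\lambda)$ (the uniform distribution when $\lambda=1$). Logarithms are natural. *)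

theory Defs
  imports "HOL-Analysis.Analysis"
begin

text \<open>Finite simple graphs: a finite vertex set V of naturals together with a
symmetric irreflexive edge relation E whose edges lie inside V.  Every finite
graph is isomorphic to one of this form.\<close>

definition sgraph :: "nat set \<Rightarrow> (nat \<Rightarrow> nat \<Rightarrow> bool) \<Rightarrow> bool" where
  "sgraph V E \<longleftrightarrow> finite V \<and> (\<forall>x y. E x y \<longrightarrow> x \<in> V \<and> y \<in> V)
     \<and> (\<forall>x y. E x y \<longrightarrow> E y x) \<and> (\<forall>x. \<not> E x x)"

definition triangle_free :: "nat set \<Rightarrow> (nat \<Rightarrow> nat \<Rightarrow> bool) \<Rightarrow> bool" where
  "triangle_free V E \<longleftrightarrow> \<not> (\<exists>x\<in>V. \<exists>y\<in>V. \<exists>z\<in>V. E x y \<and> E y z \<and> E x z)"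

definition indep_set :: "nat set \<Rightarrow> (nat \<Rightarrow> nat \<Rightarrow> bool) \<Rightarrow> nat set \<Rightarrow> bool" where
  "indep_set V E J \<longleftrightarrow> J \<subseteq> V \<and> (\<forall>x\<in>J. \<forall>y\<in>J. \<not> E x y)"

definition indep_number :: "nat set \<Rightarrow> (nat \<Rightarrow> nat \<Rightarrow> bool) \<Rightarrow> nat" where
  "indep_number V E = Max (card ` {J. indep_set V E J})"

definition indep_poly :: "nat set \<Rightarrow> (nat \<Rightarrow> nat \<Rightarrow> bool) \<Rightarrow> real \<Rightarrow> real" where
  "indep_poly V E t = (\<Sum>J\<in>{J. indep_set V E J}. t ^ card J)"

definition avg_indep :: "nat set \<Rightarrow> (nat \<Rightarrow> nat \<Rightarrow> bool) \<Rightarrow> real \<Rightarrow> real" where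
  "avg_indep V E t = t * deriv (indep_poly V E) t / indep_poly V E t"

definition degree :: "nat set \<Rightarrow> (nat \<Rightarrow> nat \<Rightarrow> bool) \<Rightarrow> nat \<Rightarrow> nat" where
  "degree V E x = card {y\<in>V. E x y}"

definition min_degree :: "nat set \<Rightarrow> (nat \<Rightarrow> nat \<Rightarrow> bool) \<Rightarrow> nat" where
  "min_degree V E = Min (degree V E ` V)"

definition ramsey3 :: "nat \<Rightarrow> nat" where
  "ramsey3 k = (LEAST n. \<forall>E. sgraph {0..<n} E \<longrightarrow>
       \<not> triangle_free {0..<n} E \<or> (\<exists>J. indep_set {0..<n} E J \<and> card J = k))"

end

theory Submission
  imports Defs
begin



lemma sum_pow_card:
  fixes x :: real
  assumes "finite U"
  shows "(\<Sum>S\<in>Pow U. x ^ card S) = (1 + x) ^ card U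
       \<and> (\<Sum>S\<in>Pow U. real (card S) * x ^ card S) = real (card U) * x * (1 + x) ^ (card U - 1)"
  using assms
proof (induction U rule: finite_induct)
  case empty
  then show ?case by simp
next
  case (insert a A)
  have Pw: "Pow (insert a A) = Pow A \<union> insert a ` Pow A" by (rule Pow_insert)
  have disj: "Pow A \<inter> insert a ` Pow A = {}" using insert.hyps by auto
  have inj: "inj_on (insert a) (Pow A)" using insert.hyps unfolding inj_on_def by (metis PowD insert_ident subsetD)
  have fin: "finite (Pow A)" using insert.hyps by simp
  have cS: "\<And>S. S \<in> Pow A \<Longrightarrow> card (insert a S) = Suc (card S)"
    using insert.hyps by (meson PowD finite_subset card_insert_disjoint subsetD)
  have s1: "(\<Sum>S\<in>Pow (insert a A). x ^ card S) = (\<Sum>S\<in>Pow A. x ^ card S) + (\<Sum>S\<in>Pow A. x ^ card (insert a S))"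
    unfolding Pw using disj fin inj by (simp add: sum.union_disjoint sum.reindex)
  have s2: "(\<Sum>S\<in>Pow (insert a A). real (card S) * x ^ card S) = (\<Sum>S\<in>Pow A. real (card S) * x ^ card S) + (\<Sum>S\<in>Pow A. real (card (insert a S)) * x ^ card (insert a S))"
    unfolding Pw using disj fin inj by (simp add: sum.union_disjoint sum.reindex)
  have t1: "(\<Sum>S\<in>Pow A. x ^ card (insert a S)) = x * (\<Sum>S\<in>Pow A. x ^ card S)"
    by (simp add: cS sum_distrib_left)
  have t2: "(\<Sum>S\<in>Pow A. real (card (insert a S)) * x ^ card (insert a S)) = x * (\<Sum>S\<in>Pow A. real (card S) * x ^ card S) + x * (\<Sum>S\<in>Pow A. x ^ card S)"
    by (simp add: cS sum_distrib_left sum.distrib algebra_simps)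
  have cA: "card (insert a A) = Suc (card A)" using insert.hyps by simp
  show ?case
  proof
    show "(\<Sum>S\<in>Pow (insert a A). x ^ card S) = (1 + x) ^ card (insert a A)"
      using s1 t1 insert.IH cA by (simp add: algebra_simps)
    have "(\<Sum>S\<in>Pow (insert a A). real (card S) * x ^ card S)
        = (1 + x) * (real (card A) * x * (1 + x) ^ (card A - 1)) + x * (1 + x) ^ card A"
      using s2 t2 insert.IH by (simp add: algebra_simps)
    also have "\<dots> = real (card (insert a A)) * x * (1 + x) ^ (card (insert a A) - 1)"
    proof (cases "card A")
      case 0 then show ?thesis using cA by simp
    next
      case (Suc m) then show ?thesis using cA by (simp add: algebra_simps)
    qed
    finally show "(\<Sum>S\<in>Pow (insert a A). real (card S) * x ^ card S) = real (card (insert a A)) * x * (1 + x) ^ (card (insert a A) - 1)" .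
  qed
qed

lemma ind_finite: "sgraph V E \<Longrightarrow> finite {J. indep_set V E J}"
  unfolding sgraph_def indep_set_def
  by (rule finite_subset[of _ "Pow V"]) auto

lemma ind_sub: "indep_set V E J \<Longrightarrow> J \<subseteq> V" unfolding indep_set_def by auto

lemma ind_empty: "indep_set V E {}" unfolding indep_set_def by auto

lemma poly_pos:
  assumes "sgraph V E" "t > 0"
  shows "indep_poly V E t > 0"
proof -
  have "indep_poly V E t \<ge> t ^ card ({}::nat set)"
    unfolding indep_poly_def
    by (rule member_le_sum) (use assms ind_finite ind_empty in auto)
  then show ?thesis
    by (smt (verit, ccfv_SIG) assms card.empty indep_poly_def ind_finite one_le_power power_0 sum_nonneg zero_le_power)
qed

lemma deriv_poly:
  assumes "sgraph V E"
  shows "deriv (indep_poly V E) t = (\<Sum>J\<in>{J. indep_set V E J}. real (card J) * t ^ (card J - 1))"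
proof -
  have "(indep_poly V E has_real_derivative (\<Sum>J\<in>{J. indep_set V E J}. real (card J) * t ^ (card J - 1))) (at t)"
    unfolding indep_poly_def[abs_def]
    by (rule DERIV_sum) (auto intro!: derivative_eq_intros)
  then show ?thesis by (rule DERIV_imp_deriv)
qed

lemma avg_eq:
  assumes "sgraph V E" "t > 0"
  shows "avg_indep V E t = (\<Sum>J\<in>{J. indep_set V E J}. real (card J) * t ^ card J) / indep_poly V E t"
proof -
  have "t * (\<Sum>J\<in>{J. indep_set V E J}. real (card J) * t ^ (card J - 1))
      = (\<Sum>J\<in>{J. indep_set V E J}. real (card J) * t ^ card J)"
    unfolding sum_distrib_left
  proof (rule sum.cong[OF refl])
    fix J show "t * (real (card J) * t ^ (card J - 1)) = real (card J) * t ^ card J"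
      by (cases "card J") auto
  qed
  then show ?thesis unfolding avg_indep_def deriv_poly[OF assms(1)] by simp
qed




definition Ts :: "nat set \<Rightarrow> (nat \<Rightarrow> nat \<Rightarrow> bool) \<Rightarrow> nat \<Rightarrow> nat set set" where
  "Ts V E v = {T. indep_set V E T \<and> (\<forall>u\<in>T. \<not> E v u)}"

definition UnC :: "(nat \<Rightarrow> nat \<Rightarrow> bool) \<Rightarrow> nat \<Rightarrow> nat set \<Rightarrow> nat set" where
  "UnC E v T = {u. E v u \<and> (\<forall>w\<in>T. \<not> E u w)}"

lemma jensen_exp:
  fixes q y :: "'a \<Rightarrow> real"
  assumes "finite A" "\<And>i. i \<in> A \<Longrightarrow> q i \<ge> 0" "sum q A > 0"
  shows "(\<Sum>i\<in>A. q i * exp (- c * y i)) \<ge> sum q A * exp (- c * ((\<Sum>i\<in>A. q i * y i) / sum q A))"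
proof -
  define Q where "Q = sum q A"
  define m where "m = (\<Sum>i\<in>A. q i * y i) / Q"
  have "\<And>i. i \<in> A \<Longrightarrow> q i * exp (- c * y i) \<ge> q i * (exp (- c * m) * (1 - c * (y i - m)))"
  proof -
    fix i assume i: "i \<in> A"
    have "exp (- c * y i) = exp (- c * m) * exp (- c * (y i - m))"
      by (simp add: exp_add[symmetric] algebra_simps)
    also have "\<dots> \<ge> exp (- c * m) * (1 - c * (y i - m))"
      using exp_ge_add_one_self[of "- c * (y i - m)"] by (intro mult_left_mono) auto
    finally show "q i * exp (- c * y i) \<ge> q i * (exp (- c * m) * (1 - c * (y i - m)))"
      using assms(2)[OF i] by (intro mult_left_mono) auto
  qed
  then have "(\<Sum>i\<in>A. q i * exp (- c * y i)) \<ge> (\<Sum>i\<in>A. q i * (exp (- c * m) * (1 - c * (y i - m))))"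
    by (rule sum_mono)
  also have "(\<Sum>i\<in>A. q i * (exp (- c * m) * (1 - c * (y i - m))))
     = exp (- c * m) * (Q - c * (\<Sum>i\<in>A. q i * y i) + c * m * Q)"
    unfolding Q_def by (simp add: algebra_simps sum.distrib sum_subtractf sum_distrib_left sum_distrib_right)
  also have "\<dots> = Q * exp (- c * m)"
    using assms(3) unfolding m_def Q_def by (simp add: field_simps)
  finally show ?thesis unfolding Q_def m_def by simp
qed

context
  fixes V :: "nat set" and E :: "nat \<Rightarrow> nat \<Rightarrow> bool"
  assumes G: "sgraph V E" and tf: "triangle_free V E"
begin

lemma finV: "finite V" using G unfolding sgraph_def by auto
lemma EV: "E x y \<Longrightarrow> x \<in> V \<and> y \<in> V" using G unfolding sgraph_def by auto
lemma Esym: "E x y \<Longrightarrow> E y x" using G unfolding sgraph_def by auto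
lemma Eirr: "\<not> E x x" using G unfolding sgraph_def by auto
lemma notri: "E x y \<Longrightarrow> E y z \<Longrightarrow> E x z \<Longrightarrow> False"
  using tf EV unfolding triangle_free_def by blast

lemma Ts_finite: "finite (Ts V E v)"
  using ind_finite[OF G] unfolding Ts_def by (rule finite_subset[rotated]) auto

lemma UnC_finite: "finite (UnC E v T)"
  by (rule finite_subset[of _ V]) (auto simp: UnC_def dest: EV intro: finV)

lemma decomp:
  assumes v: "v \<in> V"
  shows "(\<Sum>J\<in>{J. indep_set V E J}. f J) = (\<Sum>T\<in>Ts V E v. \<Sum>S\<in>Pow (UnC E v T). f (T \<union> S))"
proof -
  define N where "N = {u. E v u}"
  have "(\<Sum>T\<in>Ts V E v. \<Sum>S\<in>Pow (UnC E v T). f (T \<union> S))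
      = (\<Sum>(T, S)\<in>Sigma (Ts V E v) (\<lambda>T. Pow (UnC E v T)). f (T \<union> S))"
    by (rule sum.Sigma) (auto simp: Ts_finite UnC_finite)
  also have "\<dots> = (\<Sum>J\<in>{J. indep_set V E J}. f J)"
  proof -
    have bij: "bij_betw (\<lambda>(T, S). T \<union> S) (Sigma (Ts V E v) (\<lambda>T. Pow (UnC E v T))) {J. indep_set V E J}"
    proof (rule bij_betw_byWitness[where f' = "\<lambda>J. (J - N, J \<inter> N)"])
      show "\<forall>a\<in>Sigma (Ts V E v) (\<lambda>T. Pow (UnC E v T)). (\<lambda>J. (J - N, J \<inter> N)) ((\<lambda>(T, S). T \<union> S) a) = a"
        by (auto simp: Ts_def UnC_def N_def)
      show "\<forall>a'\<in>{J. indep_set V E J}. (\<lambda>(T, S). T \<union> S) ((\<lambda>J. (J - N, J \<inter> N)) a') = a'"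
        by auto
      show "(\<lambda>(T, S). T \<union> S) ` Sigma (Ts V E v) (\<lambda>T. Pow (UnC E v T)) \<subseteq> {J. indep_set V E J}"
      proof (rule subsetI)
        fix J assume "J \<in> (\<lambda>(T, S). T \<union> S) ` Sigma (Ts V E v) (\<lambda>T. Pow (UnC E v T))"
        then obtain T S where T: "T \<in> Ts V E v" and S: "S \<in> Pow (UnC E v T)" and J: "J = T \<union> S" by auto
        have "indep_set V E (T \<union> S)"
          unfolding indep_set_def
        proof (intro conjI ballI)
          show "T \<union> S \<subseteq> V" using T S by (auto simp: Ts_def UnC_def indep_set_def dest: EV)
        next
          fix x y assume x: "x \<in> T \<union> S" and y: "y \<in> T \<union> S"
          show "\<not> E x y"
          proof
            assume e: "E x y"
            consider "x \<in> T" "y \<in> T" | "x \<in> T" "y \<in> S" | "x \<in> S" "y \<in> T" | "x \<in> S" "y \<in> S"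
              using x y by blast
            then show False
            proof cases
              case 1 then show ?thesis using T e by (auto simp: Ts_def indep_set_def)
            next
              case 2 then show ?thesis using S e Esym by (auto simp: UnC_def)
            next
              case 3 then show ?thesis using S e by (auto simp: UnC_def)
            next
              case 4 then have "E v x" "E v y" using S by (auto simp: UnC_def)
              then show ?thesis using e notri by blast
            qed
          qed
        qed
        then show "J \<in> {J. indep_set V E J}" using J by simp
      qed
      show "(\<lambda>J. (J - N, J \<inter> N)) ` {J. indep_set V E J} \<subseteq> Sigma (Ts V E v) (\<lambda>T. Pow (UnC E v T))"
        by (auto simp: Ts_def UnC_def N_def indep_set_def)
    qed
    from sum.reindex_bij_betw[OF bij, of f] show ?thesis by (simp add: case_prod_unfold)
  qed
  finally show ?thesis by simp
qed

end



context
  fixes V :: "nat set" and E :: "nat \<Rightarrow> nat \<Rightarrow> bool" and x :: real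
  assumes G: "sgraph V E" and tf: "triangle_free V E"
begin

lemma cu:
  assumes T: "T \<in> Ts V E v" and S: "S \<subseteq> UnC E v T"
  shows "card (T \<union> S) = card T + card S" "(T \<union> S) \<inter> {u. E v u} = S" "(v \<in> T \<union> S) = (v \<in> T)"
proof -
  have fT: "finite T" using T finV[OF G tf] by (auto simp: Ts_def indep_set_def intro: finite_subset)
  have fS: "finite S" using S UnC_finite[OF G tf] by (rule finite_subset)
  have d: "T \<inter> S = {}" using T S by (auto simp: Ts_def UnC_def)
  show "card (T \<union> S) = card T + card S" using fT fS d by (rule card_Un_disjoint)
  show "(T \<union> S) \<inter> {u. E v u} = S" using T S by (auto simp: Ts_def UnC_def)
  show "(v \<in> T \<union> S) = (v \<in> T)" using S Eirr[OF G tf] by (auto simp: UnC_def)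
qed

lemma F4: "T \<in> Ts V E v \<Longrightarrow> v \<in> T \<Longrightarrow> UnC E v T = {}"
  using Esym[OF G tf] by (auto simp: UnC_def)

lemma F1:
  assumes v: "v \<in> V"
  shows "indep_poly V E x = (\<Sum>T\<in>Ts V E v. x ^ card T * (1 + x) ^ card (UnC E v T))"
proof -
  have "indep_poly V E x = (\<Sum>T\<in>Ts V E v. \<Sum>S\<in>Pow (UnC E v T). x ^ card (T \<union> S))"
    unfolding indep_poly_def by (rule decomp[OF G tf v])
  also have "\<dots> = (\<Sum>T\<in>Ts V E v. x ^ card T * (\<Sum>S\<in>Pow (UnC E v T). x ^ card S))"
    unfolding sum_distrib_left
    by (intro sum.cong refl) (simp add: cu power_add)
  also have "\<dots> = (\<Sum>T\<in>Ts V E v. x ^ card T * (1 + x) ^ card (UnC E v T))"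
    using sum_pow_card[OF UnC_finite[OF G tf]] by simp
  finally show ?thesis .
qed

lemma F2:
  assumes v: "v \<in> V"
  shows "(\<Sum>J\<in>{J. indep_set V E J}. if v \<in> J then x ^ card J else 0)
       = (\<Sum>T\<in>Ts V E v. if v \<in> T then x ^ card T else 0)"
proof -
  have "(\<Sum>J\<in>{J. indep_set V E J}. if v \<in> J then x ^ card J else 0)
     = (\<Sum>T\<in>Ts V E v. \<Sum>S\<in>Pow (UnC E v T). if v \<in> T \<union> S then x ^ card (T \<union> S) else 0)"
    by (rule decomp[OF G tf v])
  also have "\<dots> = (\<Sum>T\<in>Ts V E v. if v \<in> T then x ^ card T else 0)"
  proof (intro sum.cong refl)
    fix T assume T: "T \<in> Ts V E v"
    show "(\<Sum>S\<in>Pow (UnC E v T). if v \<in> T \<union> S then x ^ card (T \<union> S) else 0) = (if v \<in> T then x ^ card T else 0)"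
    proof (cases "v \<in> T")
      case True
      then show ?thesis using F4[OF T True] by simp
    next
      case False
      then show ?thesis using cu(3)[OF T] by simp
    qed
  qed
  finally show ?thesis .
qed

lemma F3:
  assumes v: "v \<in> V"
  shows "(\<Sum>J\<in>{J. indep_set V E J}. x ^ card J * real (card (J \<inter> {u. E v u})))
       = (\<Sum>T\<in>Ts V E v. x ^ card T * (real (card (UnC E v T)) * x * (1 + x) ^ (card (UnC E v T) - 1)))"
proof -
  have "(\<Sum>J\<in>{J. indep_set V E J}. x ^ card J * real (card (J \<inter> {u. E v u})))
     = (\<Sum>T\<in>Ts V E v. \<Sum>S\<in>Pow (UnC E v T). x ^ card (T \<union> S) * real (card ((T \<union> S) \<inter> {u. E v u})))"
    by (rule decomp[OF G tf v])
  also have "\<dots> = (\<Sum>T\<in>Ts V E v. x ^ card T * (\<Sum>S\<in>Pow (UnC E v T). real (card S) * x ^ card S))"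
    unfolding sum_distrib_left
    by (intro sum.cong refl) (simp add: cu power_add)
  also have "\<dots> = (\<Sum>T\<in>Ts V E v. x ^ card T * (real (card (UnC E v T)) * x * (1 + x) ^ (card (UnC E v T) - 1)))"
    using sum_pow_card[OF UnC_finite[OF G tf]] by simp
  finally show ?thesis .
qed

lemma F5:
  assumes v: "v \<in> V"
  shows "(\<Sum>T\<in>Ts V E v. if v \<in> T then x ^ card T else 0) = x * (\<Sum>T\<in>Ts V E v. if v \<in> T then 0 else x ^ card T)"
proof -
  have l: "(\<Sum>T\<in>Ts V E v. if v \<in> T then x ^ card T else 0) = (\<Sum>T\<in>{T\<in>Ts V E v. v \<in> T}. x ^ card T)"
    using Ts_finite[OF G tf] by (simp add: sum.inter_filter)
  have r: "(\<Sum>T\<in>Ts V E v. if v \<in> T then 0 else x ^ card T) = (\<Sum>T\<in>{T\<in>Ts V E v. v \<notin> T}. x ^ card T)"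
    using sum.inter_filter[where g = "\<lambda>T. x ^ card T" and P = "\<lambda>T. v \<notin> T", OF Ts_finite[OF G tf]]
    by (simp add: if_distrib cong: if_cong) (metis (no_types, lifting))
  have bij: "bij_betw (insert v) {T\<in>Ts V E v. v \<notin> T} {T\<in>Ts V E v. v \<in> T}"
  proof (rule bij_betw_byWitness[where f' = "\<lambda>T. T - {v}"])
    show "\<forall>a\<in>{T \<in> Ts V E v. v \<notin> T}. insert v a - {v} = a" by auto
    show "\<forall>a'\<in>{T \<in> Ts V E v. v \<in> T}. insert v (a' - {v}) = a'" by auto
    show "insert v ` {T \<in> Ts V E v. v \<notin> T} \<subseteq> {T \<in> Ts V E v. v \<in> T}"
      using v Esym[OF G tf] Eirr[OF G tf] by (auto simp: Ts_def indep_set_def)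
    show "(\<lambda>T. T - {v}) ` {T \<in> Ts V E v. v \<in> T} \<subseteq> {T \<in> Ts V E v. v \<notin> T}"
      by (auto simp: Ts_def indep_set_def)
  qed
  have fin: "\<And>T. T \<in> Ts V E v \<Longrightarrow> finite T"
    using finV[OF G tf] by (auto simp: Ts_def indep_set_def intro: finite_subset)
  have "(\<Sum>T\<in>{T\<in>Ts V E v. v \<in> T}. x ^ card T) = (\<Sum>T\<in>{T\<in>Ts V E v. v \<notin> T}. x ^ card (insert v T))"
    using sum.reindex_bij_betw[OF bij, of "\<lambda>T. x ^ card T"] by simp
  also have "\<dots> = (\<Sum>T\<in>{T\<in>Ts V E v. v \<notin> T}. x * x ^ card T)"
    by (intro sum.cong refl) (simp add: fin)
  also have "\<dots> = x * (\<Sum>T\<in>{T\<in>Ts V E v. v \<notin> T}. x ^ card T)"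
    by (rule sum_distrib_left[symmetric])
  finally show ?thesis using l r by simp
qed

end



definition ybar :: "nat set \<Rightarrow> (nat \<Rightarrow> nat \<Rightarrow> bool) \<Rightarrow> real \<Rightarrow> nat \<Rightarrow> real" where
  "ybar V E x v = (\<Sum>T\<in>Ts V E v. x ^ card T * (1 + x) ^ card (UnC E v T) * real (card (UnC E v T))) / indep_poly V E x"

lemma card_filter_real:
  assumes "finite J"
  shows "real (card {u\<in>J. P u}) = (\<Sum>u\<in>J. if P u then 1 else 0)"
proof -
  have "real (card {u\<in>J. P u}) = (\<Sum>u\<in>{u\<in>J. P u}. 1)" by simp
  also have "\<dots> = (\<Sum>u\<in>J. if P u then 1 else 0)"
    by (rule sum.inter_filter[OF assms])
  finally show ?thesis .
qed

context
  fixes V :: "nat set" and E :: "nat \<Rightarrow> nat \<Rightarrow> bool" and x :: real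
  assumes G: "sgraph V E" and tf: "triangle_free V E" and xpos: "x > 0"
begin

lemma ybar_nonneg: "ybar V E x v \<ge> 0"
  unfolding ybar_def using poly_pos[OF G xpos] xpos
  by (intro divide_nonneg_pos sum_nonneg) auto

lemma vertex_bound1:
  assumes v: "v \<in> V"
  shows "(\<Sum>J\<in>{J. indep_set V E J}. if v \<in> J then x ^ card J else 0)
     \<ge> x / (1 + x) * indep_poly V E x * exp (- ln (1 + x) * ybar V E x v)"
proof -
  define Z where "Z = indep_poly V E x"
  define c where "c = ln (1 + x)"
  define q where "q T = x ^ card T * (1 + x) ^ card (UnC E v T)" for T
  define y where "y T = real (card (UnC E v T))" for T
  define p where "p = (\<Sum>T\<in>Ts V E v. if v \<in> T then x ^ card T else 0)"
  define r where "r = (\<Sum>T\<in>Ts V E v. if v \<in> T then 0 else x ^ card T)"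
  have Zpos: "Z > 0" unfolding Z_def by (rule poly_pos[OF G xpos])
  have pr: "p = x * r" unfolding p_def r_def by (rule F5[OF G tf v])
  have "(\<Sum>T\<in>Ts V E v. x ^ card T) = p + r"
    unfolding p_def r_def sum.distrib[symmetric] by (intro sum.cong) auto
  then have p_eq: "p = x / (1 + x) * (\<Sum>T\<in>Ts V E v. x ^ card T)"
    using pr xpos by (simp add: field_simps)
  have qe: "q T * exp (- c * y T) = x ^ card T" for T
  proof -
    have "(1 + x) ^ card (UnC E v T) = exp (c * y T)"
    proof -
      have "exp (ln (1 + x) * real (card (UnC E v T))) = exp (ln (1 + x)) ^ card (UnC E v T)"
        by (metis exp_of_nat_mult mult.commute)
      then show ?thesis unfolding c_def y_def using xpos by simp
    qed
    then show ?thesis unfolding q_def by (simp add: exp_minus field_simps)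
  qed
  have sq: "sum q (Ts V E v) = Z" unfolding q_def Z_def by (rule F1[OF G tf v, symmetric])
  have "(\<Sum>T\<in>Ts V E v. x ^ card T) = (\<Sum>T\<in>Ts V E v. q T * exp (- c * y T))"
    using qe by simp
  also have "\<dots> \<ge> sum q (Ts V E v) * exp (- c * ((\<Sum>T\<in>Ts V E v. q T * y T) / sum q (Ts V E v)))"
    by (rule jensen_exp) (use Ts_finite[OF G tf] sq Zpos xpos in \<open>auto simp: q_def\<close>)
  finally have j: "(\<Sum>T\<in>Ts V E v. x ^ card T) \<ge> sum q (Ts V E v) * exp (- c * ((\<Sum>T\<in>Ts V E v. q T * y T) / sum q (Ts V E v)))" .
  have yb: "(\<Sum>T\<in>Ts V E v. q T * y T) / Z = ybar V E x v"
    unfolding ybar_def Z_def q_def y_def by simp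
  have "(\<Sum>T\<in>Ts V E v. x ^ card T) \<ge> Z * exp (- c * ybar V E x v)"
    using j unfolding sq yb .
  then have "p \<ge> x / (1 + x) * (Z * exp (- c * ybar V E x v))"
    unfolding p_eq using xpos by (intro mult_left_mono) auto
  then show ?thesis using F2[OF G tf v] unfolding p_def Z_def c_def by simp
qed

lemma vertex_bound2:
  assumes v: "v \<in> V"
  shows "(\<Sum>J\<in>{J. indep_set V E J}. x ^ card J * real (card (J \<inter> {u. E v u})))
     = x / (1 + x) * indep_poly V E x * ybar V E x v"
proof -
  have Zpos: "indep_poly V E x > 0" by (rule poly_pos[OF G xpos])
  have "(\<Sum>J\<in>{J. indep_set V E J}. x ^ card J * real (card (J \<inter> {u. E v u})))
    = (\<Sum>T\<in>Ts V E v. x ^ card T * (real (card (UnC E v T)) * x * (1 + x) ^ (card (UnC E v T) - 1)))"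
    by (rule F3[OF G tf v])
  also have "\<dots> = x / (1 + x) * (\<Sum>T\<in>Ts V E v. x ^ card T * (1 + x) ^ card (UnC E v T) * real (card (UnC E v T)))"
    unfolding sum_distrib_left
  proof (intro sum.cong refl)
    fix T
    show "x ^ card T * (real (card (UnC E v T)) * x * (1 + x) ^ (card (UnC E v T) - 1)) =
         x / (1 + x) * (x ^ card T * (1 + x) ^ card (UnC E v T) * real (card (UnC E v T)))"
      using xpos by (cases "card (UnC E v T)") (simp_all add: field_simps)
  qed
  also have "\<dots> = x / (1 + x) * indep_poly V E x * ybar V E x v"
    unfolding ybar_def using Zpos by simp
  finally show ?thesis .
qed

lemma double_count:
  assumes J: "J \<subseteq> V" and deg: "\<And>v. v \<in> V \<Longrightarrow> real (degree V E v) \<le> D"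
  shows "(\<Sum>v\<in>V. real (card (J \<inter> {u. E v u}))) \<le> D * real (card J)"
proof -
  have fJ: "finite J" using J finV[OF G tf] by (rule finite_subset)
  have "(\<Sum>v\<in>V. real (card (J \<inter> {u. E v u}))) = (\<Sum>v\<in>V. \<Sum>u\<in>J. if E v u then 1 else 0)"
  proof (intro sum.cong refl)
    fix v
    have "J \<inter> {u. E v u} = {u\<in>J. E v u}" by auto
    then show "real (card (J \<inter> {u. E v u})) = (\<Sum>u\<in>J. if E v u then 1 else 0)"
      using card_filter_real[OF fJ] by simp
  qed
  also have "\<dots> = (\<Sum>u\<in>J. \<Sum>v\<in>V. if E v u then 1 else 0)" by (rule sum.swap)
  also have "\<dots> = (\<Sum>u\<in>J. real (degree V E u))"
  proof (intro sum.cong refl)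
    fix u
    have "{y\<in>V. E u y} = {v\<in>V. E v u}" using Esym[OF G tf] by auto
    then show "(\<Sum>v\<in>V. if E v u then 1 else 0) = real (degree V E u)"
      unfolding degree_def using card_filter_real[OF finV[OF G tf]] by simp
  qed
  also have "\<dots> \<le> (\<Sum>u\<in>J. D)" using J deg by (intro sum_mono) auto
  finally show ?thesis by (simp add: mult.commute)
qed

lemma occupancy:
  assumes Vne: "V \<noteq> {}" and deg: "\<And>v. v \<in> V \<Longrightarrow> real (degree V E v) \<le> D" and Dpos: "D > 0"
  shows "\<exists>y\<ge>0. avg_indep V E x / real (card V) \<ge> x / (1 + x) * exp (- ln (1 + x) * y)
                \<and> avg_indep V E x / real (card V) \<ge> x / (1 + x) * y / D"
proof -
  define n where "n = real (card V)"
  define Z where "Z = indep_poly V E x"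
  define M where "M = (\<Sum>J\<in>{J. indep_set V E J}. real (card J) * x ^ card J)"
  define a where "a = x / (1 + x)"
  define c where "c = ln (1 + x)"
  define y where "y = (\<Sum>v\<in>V. ybar V E x v) / n"
  have fV: "finite V" by (rule finV[OF G tf])
  have npos: "n > 0" unfolding n_def using fV Vne by (simp add: card_gt_0_iff)
  have Zpos: "Z > 0" unfolding Z_def by (rule poly_pos[OF G xpos])
  have apos: "a > 0" unfolding a_def using xpos by simp
  have avg: "avg_indep V E x = M / Z" unfolding M_def Z_def by (rule avg_eq[OF G xpos])
  have y0: "y \<ge> 0" unfolding y_def using npos ybar_nonneg by (intro divide_nonneg_pos sum_nonneg) auto
  have M1: "M = (\<Sum>v\<in>V. \<Sum>J\<in>{J. indep_set V E J}. if v \<in> J then x ^ card J else 0)"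
  proof -
    have "M = (\<Sum>J\<in>{J. indep_set V E J}. \<Sum>v\<in>V. if v \<in> J then x ^ card J else 0)"
      unfolding M_def
    proof (intro sum.cong refl)
      fix J assume "J \<in> {J. indep_set V E J}"
      then have JV: "J \<subseteq> V" by (auto dest: ind_sub)
      have "{v\<in>V. v \<in> J} = J" using JV by auto
      then have "real (card J) = (\<Sum>v\<in>V. if v \<in> J then 1 else 0)"
        using card_filter_real[OF fV, of "\<lambda>v. v \<in> J"] by simp
      then show "real (card J) * x ^ card J = (\<Sum>v\<in>V. if v \<in> J then x ^ card J else 0)"
      proof -
        have "(\<Sum>v\<in>V. if v \<in> J then x ^ card J else 0) = (\<Sum>v\<in>V. (if v \<in> J then 1 else 0) * x ^ card J)"
          by (intro sum.cong) auto
        then show ?thesis using \<open>real (card J) = _\<close> by (simp add: sum_distrib_right)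
      qed
    qed
    then show ?thesis by (simp add: sum.swap[of _ _ V])
  qed
  have "M \<ge> (\<Sum>v\<in>V. a * Z * exp (- c * ybar V E x v))"
    unfolding M1 a_def Z_def c_def by (intro sum_mono vertex_bound1) auto
  also have "(\<Sum>v\<in>V. a * Z * exp (- c * ybar V E x v)) = a * Z * (\<Sum>v\<in>V. 1 * exp (- c * ybar V E x v))"
    by (simp add: sum_distrib_left)
  also have "\<dots> \<ge> a * Z * ((\<Sum>v\<in>V. 1) * exp (- c * ((\<Sum>v\<in>V. 1 * ybar V E x v) / (\<Sum>v\<in>V. 1))))"
    using apos Zpos fV Vne
    by (intro mult_left_mono jensen_exp) (auto simp: card_gt_0_iff)
  finally have M2: "M \<ge> a * Z * (n * exp (- c * y))" unfolding y_def n_def by simp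
  have "(\<Sum>v\<in>V. \<Sum>J\<in>{J. indep_set V E J}. x ^ card J * real (card (J \<inter> {u. E v u})))
       = (\<Sum>v\<in>V. a * Z * ybar V E x v)"
    unfolding a_def Z_def by (intro sum.cong refl vertex_bound2) auto
  also have "\<dots> = a * Z * (\<Sum>v\<in>V. ybar V E x v)" by (simp add: sum_distrib_left)
  also have "\<dots> = a * Z * n * y" unfolding y_def using npos by simp
  finally have e1: "(\<Sum>J\<in>{J. indep_set V E J}. \<Sum>v\<in>V. x ^ card J * real (card (J \<inter> {u. E v u}))) = a * Z * n * y"
    by (simp add: sum.swap[of _ V])
  have "(\<Sum>J\<in>{J. indep_set V E J}. \<Sum>v\<in>V. x ^ card J * real (card (J \<inter> {u. E v u})))
       \<le> (\<Sum>J\<in>{J. indep_set V E J}. x ^ card J * (D * real (card J)))"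
  proof (intro sum_mono)
    fix J assume "J \<in> {J. indep_set V E J}"
    then have JV: "J \<subseteq> V" by (auto dest: ind_sub)
    have "(\<Sum>v\<in>V. x ^ card J * real (card (J \<inter> {u. E v u}))) = x ^ card J * (\<Sum>v\<in>V. real (card (J \<inter> {u. E v u})))"
      by (simp add: sum_distrib_left)
    also have "\<dots> \<le> x ^ card J * (D * real (card J))"
      using double_count[OF JV deg] xpos by (intro mult_left_mono) auto
    finally show "(\<Sum>v\<in>V. x ^ card J * real (card (J \<inter> {u. E v u}))) \<le> x ^ card J * (D * real (card J))" .
  qed
  also have "\<dots> = D * M" unfolding M_def by (simp add: sum_distrib_left algebra_simps)
  finally have M3: "a * Z * n * y \<le> D * M" using e1 by simp
  show ?thesis
  proof (intro exI[of _ y] conjI y0)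
    show "avg_indep V E x / real (card V) \<ge> x / (1 + x) * exp (- ln (1 + x) * y)"
      unfolding avg n_def[symmetric] a_def[symmetric] c_def[symmetric]
      using M2 Zpos npos by (simp add: field_simps)
    show "avg_indep V E x / real (card V) \<ge> x / (1 + x) * y / D"
      unfolding avg n_def[symmetric] a_def[symmetric]
      using M3 Zpos npos Dpos by (simp add: field_simps)
  qed
qed

end



lemma term_nonneg:
  fixes a b :: real
  assumes "0 < a" "a \<le> b"
  shows "(real m - real n) * (b ^ m * a ^ n - a ^ m * b ^ n) \<ge> 0"
proof (cases "n \<le> m")
  case True
  then obtain k where k: "m = n + k" using le_Suc_ex by blast
  have "b ^ m * a ^ n - a ^ m * b ^ n = a ^ n * b ^ n * (b ^ k - a ^ k)"
    unfolding k by (simp add: power_add algebra_simps)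
  also have "\<dots> \<ge> 0" using assms power_mono[of a b k] by (intro mult_nonneg_nonneg) auto
  finally show ?thesis using True by simp
next
  case False
  then obtain k where k: "n = m + k" using le_Suc_ex nat_le_linear by blast
  have "b ^ m * a ^ n - a ^ m * b ^ n = - (a ^ m * b ^ m * (b ^ k - a ^ k))"
    unfolding k by (simp add: power_add algebra_simps)
  moreover have "a ^ m * b ^ m * (b ^ k - a ^ k) \<ge> 0" using assms power_mono[of a b k] by (intro mult_nonneg_nonneg) auto
  ultimately show ?thesis using False by (simp add: mult_nonpos_nonneg mult_nonpos_nonpos)
qed

lemma ratio_mono:
  fixes a b :: real and g :: "'a \<Rightarrow> nat"
  assumes fin: "finite A" and ab: "0 < a" "a \<le> b"
  shows "(\<Sum>J\<in>A. real (g J) * a ^ g J) * (\<Sum>K\<in>A. b ^ g K) \<le> (\<Sum>J\<in>A. real (g J) * b ^ g J) * (\<Sum>K\<in>A. a ^ g K)"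
proof -
  define F where "F J K = real (g J) * (b ^ g J * a ^ g K - a ^ g J * b ^ g K)" for J K
  have diff: "(\<Sum>J\<in>A. real (g J) * b ^ g J) * (\<Sum>K\<in>A. a ^ g K) - (\<Sum>J\<in>A. real (g J) * a ^ g J) * (\<Sum>K\<in>A. b ^ g K)
     = (\<Sum>J\<in>A. \<Sum>K\<in>A. F J K)"
  proof -
    have p1: "(\<Sum>J\<in>A. real (g J) * b ^ g J) * (\<Sum>K\<in>A. a ^ g K) = (\<Sum>J\<in>A. \<Sum>K\<in>A. real (g J) * b ^ g J * a ^ g K)"
      by (simp add: sum_product)
    have p2: "(\<Sum>J\<in>A. real (g J) * a ^ g J) * (\<Sum>K\<in>A. b ^ g K) = (\<Sum>J\<in>A. \<Sum>K\<in>A. real (g J) * a ^ g J * b ^ g K)"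
      by (simp add: sum_product)
    show ?thesis unfolding p1 p2 F_def sum_subtractf[symmetric] by (intro sum.cong refl) (simp add: algebra_simps)
  qed
  have sw: "(\<Sum>J\<in>A. \<Sum>K\<in>A. F J K) = (\<Sum>J\<in>A. \<Sum>K\<in>A. F K J)" by (rule sum.swap)
  have "2 * (\<Sum>J\<in>A. \<Sum>K\<in>A. F J K) = (\<Sum>J\<in>A. \<Sum>K\<in>A. F J K + F K J)"
    using sw by (simp add: sum.distrib)
  also have "\<dots> = (\<Sum>J\<in>A. \<Sum>K\<in>A. (real (g J) - real (g K)) * (b ^ g J * a ^ g K - a ^ g J * b ^ g K))"
    unfolding F_def by (intro sum.cong refl) (simp add: algebra_simps)
  also have "\<dots> \<ge> 0" using ab by (intro sum_nonneg term_nonneg) auto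
  finally show ?thesis using diff by simp
qed

lemma avg_mono:
  assumes G: "sgraph V E" and ab: "0 < a" "a \<le> b"
  shows "avg_indep V E a \<le> avg_indep V E b"
proof -
  have bpos: "b > 0" using ab by simp
  have "(\<Sum>J\<in>{J. indep_set V E J}. real (card J) * a ^ card J) * indep_poly V E b
     \<le> (\<Sum>J\<in>{J. indep_set V E J}. real (card J) * b ^ card J) * indep_poly V E a"
    unfolding indep_poly_def by (rule ratio_mono[OF ind_finite[OF G] ab])
  then show ?thesis
    unfolding avg_eq[OF G ab(1)] avg_eq[OF G bpos]
    using poly_pos[OF G ab(1)] poly_pos[OF G bpos]
    by (simp add: divide_simps)
qed

lemma analytic:
  fixes \<delta> x :: real
  assumes d: "0 < \<delta>" "\<delta> < 1" and x: "0 < x" "x \<le> \<delta>"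
  shows "\<exists>K0. \<forall>D t y. D \<ge> K0 \<longrightarrow> y \<ge> 0 \<longrightarrow> t \<ge> x / (1 + x) * exp (- ln (1 + x) * y)
            \<longrightarrow> t \<ge> x / (1 + x) * y / D \<longrightarrow> t \<ge> (1 - \<delta>) ^ 2 * ln D / D"
proof -
  define c where "c = ln (1 + x)"
  define a where "a = x / (1 + x)"
  have cpos: "c > 0" unfolding c_def using x by simp
  have cle: "c \<le> x" unfolding c_def using x by (simp add: ln_add_one_self_le_self)
  have apos: "a > 0" unfolding a_def using x by simp
  have ac: "a / c \<ge> 1 - \<delta>"
  proof -
    have "a / c \<ge> a / x" using cpos cle apos by (intro divide_left_mono) auto
    also have "a / x = 1 / (1 + x)" unfolding a_def using x by simp
    finally have "a / c \<ge> 1 / (1 + x)" .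
    moreover have "1 / (1 + x) \<ge> 1 - \<delta>"
    proof -
      have "(1 - \<delta>) * (1 + x) \<le> (1 - \<delta>) * (1 + \<delta>)" using d x by (intro mult_left_mono) auto
      also have "\<dots> \<le> 1" by (simp add: algebra_simps)
      finally show ?thesis using x by (simp add: field_simps)
    qed
    ultimately show ?thesis by simp
  qed
  define K0 where "K0 = max 2 (exp ((2 / \<delta>) * ln (2 / (\<delta> * c))))"
  show ?thesis
  proof (intro exI[of _ K0] allI impI)
    fix D t y :: real
    assume D: "D \<ge> K0" and y0: "y \<ge> 0" and t1: "t \<ge> x / (1 + x) * exp (- ln (1 + x) * y)"
      and t2: "t \<ge> x / (1 + x) * y / D"
    have D2: "D \<ge> 2" using D unfolding K0_def by simp
    have Dpos: "D > 0" using D2 by simp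
    have lnD: "ln D > 0" using D2 by simp
    have "ln D \<ge> (2 / \<delta>) * ln (2 / (\<delta> * c))"
    proof -
      have "exp ((2 / \<delta>) * ln (2 / (\<delta> * c))) \<le> D" using D unfolding K0_def by simp
      then have "ln (exp ((2 / \<delta>) * ln (2 / (\<delta> * c)))) \<le> ln D" using Dpos by (subst ln_le_cancel_iff) auto
      then show ?thesis by simp
    qed
    then have h1: "\<delta> * ln D / 2 \<ge> ln (2 / (\<delta> * c))" using d by (simp add: field_simps)
    define s where "s = exp (\<delta> * ln D / 2)"
    have s_ge: "s \<ge> 2 / (\<delta> * c)"
    proof -
      have "exp (ln (2 / (\<delta> * c))) \<le> s" unfolding s_def using h1 by simp
      then show ?thesis using d cpos by simp
    qed
    have spos: "s > 0" unfolding s_def by simp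
    have ss: "s * s = exp (\<delta> * ln D)" unfolding s_def by (simp add: exp_add[symmetric])
    have lnD_le: "ln D \<le> (2 / \<delta>) * s"
    proof -
      have "\<delta> * ln D / 2 \<le> s" unfolding s_def using exp_ge_add_one_self[of "\<delta> * ln D / 2"] by linarith
      then show ?thesis using d by (simp add: field_simps)
    qed
    have key: "ln D / c \<le> exp (\<delta> * ln D)"
    proof -
      have "ln D / c \<le> (2 / \<delta>) * s / c" using lnD_le cpos by (intro divide_right_mono) auto
      also have "\<dots> = (2 / (\<delta> * c)) * s" by simp
      also have "\<dots> \<le> s * s" using s_ge spos by (intro mult_right_mono) auto
      finally show ?thesis using ss by simp
    qed
    show "t \<ge> (1 - \<delta>) ^ 2 * ln D / D"
    proof (cases "y \<ge> (1 - \<delta>) * ln D / c")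
      case True
      have "(1 - \<delta>) ^ 2 * ln D / D \<le> a * ((1 - \<delta>) * ln D / c) / D"
      proof -
        have "(1 - \<delta>) * ((1 - \<delta>) * ln D) \<le> (a / c) * ((1 - \<delta>) * ln D)"
          using ac d lnD by (intro mult_right_mono) auto
        then have "(1 - \<delta>) ^ 2 * ln D \<le> a * ((1 - \<delta>) * ln D / c)"
          by (simp add: power2_eq_square mult.assoc)
        then show ?thesis using Dpos by (intro divide_right_mono) auto
      qed
      also have "\<dots> \<le> a * y / D" using True apos Dpos by (intro divide_right_mono mult_left_mono) auto
      finally show ?thesis using t2 unfolding a_def by simp
    next
      case False
      then have "c * y < (1 - \<delta>) * ln D" using cpos by (simp add: field_simps)
      then have "exp (- c * y) \<ge> exp (- ((1 - \<delta>) * ln D))" by simp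
      also have "exp (- ((1 - \<delta>) * ln D)) = exp (\<delta> * ln D) / D"
        using Dpos by (simp add: algebra_simps exp_diff)
      finally have e: "exp (- c * y) \<ge> exp (\<delta> * ln D) / D" .
      have "(1 - \<delta>) ^ 2 * ln D / D \<le> a * (ln D / c) / D"
      proof -
        have "(1 - \<delta>) ^ 2 * ln D \<le> (a / c) * ln D"
        proof -
          have "(1 - \<delta>) ^ 2 \<le> 1 - \<delta>" using d by (simp add: power2_eq_square mult_le_cancel_right1)
          also have "\<dots> \<le> a / c" by (rule ac)
          finally show ?thesis using lnD by (intro mult_right_mono) auto
        qed
        then have "(1 - \<delta>) ^ 2 * ln D \<le> a * (ln D / c)" by simp
        then show ?thesis using Dpos by (intro divide_right_mono) auto
      qed
      also have "\<dots> \<le> a * exp (\<delta> * ln D) / D"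
        using key apos Dpos by (intro mult_left_mono divide_right_mono) auto
      also have "\<dots> \<le> a * exp (- c * y)" using mult_left_mono[OF e, of a] apos by simp
      finally show ?thesis using t1 unfolding a_def c_def by simp
    qed
  qed
qed




lemma shearer:
  fixes \<delta> x :: real
  assumes d: "0 < \<delta>" "\<delta> < 1" and x: "0 < x" "x \<le> \<delta>"
  shows "\<exists>K0. \<forall>k::nat. real k \<ge> K0 \<longrightarrow> (\<forall>V E. sgraph V E \<and> triangle_free V E \<and> V \<noteq> {}
      \<and> (\<forall>v\<in>V. degree V E v \<le> k) \<longrightarrow> avg_indep V E x \<ge> (1 - \<delta>) ^ 2 * real (card V) * ln (real k) / real k)"
proof -
  obtain K0 where K0: "\<And>D t y. D \<ge> K0 \<Longrightarrow> y \<ge> 0 \<Longrightarrow> t \<ge> x / (1 + x) * exp (- ln (1 + x) * y)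
            \<Longrightarrow> t \<ge> x / (1 + x) * y / D \<Longrightarrow> t \<ge> (1 - \<delta>) ^ 2 * ln D / D"
    using analytic[OF d x] by blast
  show ?thesis
  proof (intro exI[of _ "max K0 1"] allI impI)
    fix k :: nat and V E
    assume k: "real k \<ge> max K0 1" and H: "sgraph V E \<and> triangle_free V E \<and> V \<noteq> {} \<and> (\<forall>v\<in>V. degree V E v \<le> k)"
    have kpos: "real k > 0" using k by simp
    obtain y where y: "y \<ge> 0" "avg_indep V E x / real (card V) \<ge> x / (1 + x) * exp (- ln (1 + x) * y)"
      "avg_indep V E x / real (card V) \<ge> x / (1 + x) * y / real k"
      using occupancy[of V E x "real k"] H x kpos by auto
    have "avg_indep V E x / real (card V) \<ge> (1 - \<delta>) ^ 2 * ln (real k) / real k"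
      using K0[OF _ y] k by simp
    moreover have "real (card V) > 0" using H by (simp add: sgraph_def card_gt_0_iff)
    ultimately show "avg_indep V E x \<ge> (1 - \<delta>) ^ 2 * real (card V) * ln (real k) / real k"
      by (simp add: field_simps)
  qed
qed

lemma indep_number_ge:
  assumes "sgraph V E" "indep_set V E J"
  shows "card J \<le> indep_number V E"
  unfolding indep_number_def using assms ind_finite[of V E] by (intro Max_ge) auto

lemma indep_number_in:
  assumes "sgraph V E"
  shows "\<exists>J. indep_set V E J \<and> card J = indep_number V E"
proof -
  have "indep_number V E \<in> card ` {J. indep_set V E J}"
    unfolding indep_number_def using assms ind_finite[of V E] ind_empty[of V E]
    by (intro Max_in) auto
  then show ?thesis by auto
qed

lemma nbhd_indep:
  assumes "sgraph V E" "triangle_free V E"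
  shows "indep_set V E {y\<in>V. E v y}"
  using assms unfolding indep_set_def triangle_free_def sgraph_def by blast

lemma size_bound:
  fixes \<delta> x r :: real
  assumes d: "0 < \<delta>" "\<delta> < 1" and x: "0 < x" "x \<le> \<delta>" and r: "r > 0"
  shows "\<exists>K0. \<forall>k::nat. real k \<ge> K0 \<longrightarrow> (\<forall>V E. sgraph V E \<and> triangle_free V E \<and> V \<noteq> {}
      \<and> (\<forall>J. indep_set V E J \<longrightarrow> card J < k) \<and> real (indep_number V E) \<ge> r * avg_indep V E x
      \<longrightarrow> real (card V) \<le> real k ^ 2 / (r * (1 - \<delta>) ^ 2 * ln (real k)))"
proof -
  obtain K0 where K0: "\<And>k V E. real k \<ge> K0 \<Longrightarrow> sgraph V E \<and> triangle_free V E \<and> V \<noteq> {}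
      \<and> (\<forall>v\<in>V. degree V E v \<le> k) \<Longrightarrow> avg_indep V E x \<ge> (1 - \<delta>) ^ 2 * real (card V) * ln (real k) / real k"
    using shearer[OF d x] by blast
  show ?thesis
  proof (intro exI[of _ "max K0 3"] allI impI)
    fix k :: nat and V E
    assume k: "real k \<ge> max K0 3" and H: "sgraph V E \<and> triangle_free V E \<and> V \<noteq> {}
      \<and> (\<forall>J. indep_set V E J \<longrightarrow> card J < k) \<and> real (indep_number V E) \<ge> r * avg_indep V E x"
    have kpos: "real k > 0" using k by simp
    have lnk: "ln (real k) > 0" using k by simp
    have deg: "\<forall>v\<in>V. degree V E v \<le> k"
      using H nbhd_indep[of V E] unfolding degree_def by (metis less_imp_le)
    have a: "avg_indep V E x \<ge> (1 - \<delta>) ^ 2 * real (card V) * ln (real k) / real k"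
      using K0[of k V E] k H deg by auto
    have "real (indep_number V E) < real k" using H indep_number_in[of V E] by auto
    then have "r * ((1 - \<delta>) ^ 2 * real (card V) * ln (real k) / real k) < real k"
      using H a r by (smt (verit) mult_left_mono)
    then have "r * (1 - \<delta>) ^ 2 * ln (real k) * real (card V) < real k * real k"
      using kpos by (simp add: field_simps)
    moreover have "r * (1 - \<delta>) ^ 2 * ln (real k) > 0" using r d lnk by simp
    ultimately show "real (card V) \<le> real k ^ 2 / (r * (1 - \<delta>) ^ 2 * ln (real k))"
      by (simp add: field_simps power2_eq_square)
  qed
qed

lemma ramsey_bound:
  assumes B: "B \<ge> 0"
    and H: "\<And>N E. sgraph {0..<N} E \<Longrightarrow> triangle_free {0..<N} E \<Longrightarrow>
              (\<forall>J. indep_set {0..<N} E J \<longrightarrow> card J < k) \<Longrightarrow> real N \<le> B"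
  shows "real (ramsey3 k) \<le> B + 1"
proof -
  define N0 where "N0 = nat (\<lfloor>B\<rfloor> + 1)"
  have N0gt: "real N0 > B" unfolding N0_def using B by linarith
  have N0le: "real N0 \<le> B + 1" unfolding N0_def using B by linarith
  have P: "\<forall>E. sgraph {0..<N0} E \<longrightarrow> \<not> triangle_free {0..<N0} E \<or> (\<exists>J. indep_set {0..<N0} E J \<and> card J = k)"
  proof (intro allI impI)
    fix E assume G: "sgraph {0..<N0} E"
    show "\<not> triangle_free {0..<N0} E \<or> (\<exists>J. indep_set {0..<N0} E J \<and> card J = k)"
    proof (cases "triangle_free {0..<N0} E")
      case False then show ?thesis by simp
    next
      case tf: True
      have "\<not> (\<forall>J. indep_set {0..<N0} E J \<longrightarrow> card J < k)"
        using H[OF G tf] N0gt by force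
      then obtain J where J: "indep_set {0..<N0} E J" "card J \<ge> k" by (auto simp: not_less)
      then obtain J' where J': "J' \<subseteq> J" "card J' = k" by (meson obtain_subset_with_card_n)
      have "indep_set {0..<N0} E J'" using J(1) J'(1) unfolding indep_set_def by blast
      then show ?thesis using J' by blast
    qed
  qed
  have "ramsey3 k \<le> N0" unfolding ramsey3_def by (rule Least_le) (rule P)
  then show ?thesis using N0le by linarith
qed

lemma avg_pos:
  assumes G: "sgraph V E" and Vne: "V \<noteq> {}" and x: "x > 0"
  shows "avg_indep V E x > 0"
proof -
  obtain v where v: "v \<in> V" using Vne by auto
  have iv: "indep_set V E {v}" using G v unfolding indep_set_def sgraph_def by auto
  have "(\<Sum>J\<in>{J. indep_set V E J}. real (card J) * x ^ card J) \<ge> real (card {v}) * x ^ card {v}"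
    by (rule member_le_sum) (use iv x ind_finite[OF G] in auto)
  then have "(\<Sum>J\<in>{J. indep_set V E J}. real (card J) * x ^ card J) > 0" using x by simp
  then show ?thesis unfolding avg_eq[OF G x] using poly_pos[OF G x] by simp
qed




lemma arith1:
  fixes \<delta> :: real assumes "0 < \<delta>" "\<delta> \<le> 1/6"
  shows "1 / ((1 - \<delta>) ^ 2) \<le> 1 + 6 * \<delta>"
proof -
  have "(1 - \<delta>) ^ 2 * (1 + 6 * \<delta>) \<ge> 1"
  proof -
    have "(1 - \<delta>) ^ 2 * (1 + 6 * \<delta>) - 1 = \<delta> * (4 - 11 * \<delta> + 6 * \<delta> ^ 2)"
      by (simp add: power2_eq_square algebra_simps)
    also have "\<dots> \<ge> 0" using assms by (intro mult_nonneg_nonneg) (auto simp: power2_eq_square)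
    finally show ?thesis by simp
  qed
  moreover have "(1 - \<delta>) ^ 2 > 0" using assms by simp
  ultimately show ?thesis by (simp add: field_simps)
qed

lemma arith2:
  fixes \<delta> :: real assumes "0 < \<delta>" "\<delta> \<le> 1/6"
  shows "1 / ((2 - \<delta>) * (1 - \<delta>) ^ 2) \<le> 1/2 + 3 * \<delta>"
proof -
  have "(2 - \<delta>) * (1 - \<delta>) ^ 2 * (1/2 + 3 * \<delta>) \<ge> 1"
  proof -
    have "(2 - \<delta>) * (1 - \<delta>) ^ 2 * (1/2 + 3 * \<delta>) - 1 = \<delta> * (7/2 - 13 * \<delta> + (23/2) * \<delta> ^ 2 - 3 * \<delta> ^ 3)"
      by (simp add: power2_eq_square power3_eq_cube algebra_simps)
    also have "\<dots> \<ge> 0"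
    proof -
      have "13 * \<delta> \<le> 13/6" using assms by simp
      moreover have "3 * \<delta> ^ 3 \<le> 1"
      proof -
        have "\<delta> ^ 3 \<le> (1/6) ^ 3" by (rule power_mono) (use assms in auto)
        moreover have "(1/6::real) ^ 3 = 1/216" by (simp add: power3_eq_cube)
        ultimately show ?thesis by linarith
      qed
      moreover have "\<delta> ^ 2 \<ge> 0" by simp
      ultimately have "7/2 - 13 * \<delta> + (23/2) * \<delta> ^ 2 - 3 * \<delta> ^ 3 \<ge> 0" by linarith
      then show ?thesis using assms by (intro mult_nonneg_nonneg) auto
    qed
    finally show ?thesis by simp
  qed
  moreover have "(2 - \<delta>) * (1 - \<delta>) ^ 2 > 0" using assms by simp
  ultimately show ?thesis by (simp add: field_simps)
qed

lemma core:
  assumes "finite V" "\<forall>x. \<not> E x x" "\<forall>x y. E x y \<longrightarrow> E y x"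
  shows "(\<forall>J. indep_set V E J \<longrightarrow> card J \<le> m) \<Longrightarrow>
     \<exists>W\<subseteq>V. (\<forall>x\<in>W. d0 \<le> card {y\<in>W. E x y}) \<and> card (V - W) \<le> (d0 + 1) * m"
  using assms(1)
proof (induction "card V" arbitrary: V m rule: less_induct)
  case less
  show ?case
  proof (cases "\<forall>x\<in>V. d0 \<le> card {y\<in>V. E x y}")
    case True
    then show ?thesis by (intro exI[of _ V]) auto
  next
    case False
    then obtain v where v: "v \<in> V" "card {y\<in>V. E v y} < d0" by (auto simp: not_le)
    define N where "N = {y\<in>V. E v y}"
    define V' where "V' = V - insert v N"
    have fV': "finite V'" unfolding V'_def using less.prems(2) by simp
    have lt: "card V' < card V" unfolding V'_def using v less.prems(2)
      by (intro psubset_card_mono) auto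
    have iv: "indep_set V E {v}" using v assms(2) unfolding indep_set_def by auto
    have m1: "m \<ge> 1" using less.prems(1) iv by force
    have bd: "\<forall>J. indep_set V' E J \<longrightarrow> card J \<le> m - 1"
    proof (intro allI impI)
      fix J assume J: "indep_set V' E J"
      have JV': "J \<subseteq> V'" using J unfolding indep_set_def by auto
      have fJ: "finite J" using JV' fV' by (rule finite_subset)
      have vJ: "v \<notin> J" using JV' unfolding V'_def by auto
      have "indep_set V E (insert v J)"
        using J JV' v assms(2,3) unfolding indep_set_def V'_def N_def by blast
      then have "card (insert v J) \<le> m" using less.prems(1) by blast
      then show "card J \<le> m - 1" using fJ vJ by simp
    qed
    obtain W where W: "W \<subseteq> V'" "\<forall>x\<in>W. d0 \<le> card {y\<in>W. E x y}" "card (V' - W) \<le> (d0 + 1) * (m - 1)"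
      using less.hyps[OF lt bd fV'] by blast
    have sub: "V - W \<subseteq> insert v N \<union> (V' - W)" unfolding V'_def by auto
    have "card (V - W) \<le> card (insert v N \<union> (V' - W))"
      using sub less.prems(2) fV' unfolding N_def by (intro card_mono) auto
    also have "\<dots> \<le> card (insert v N) + card (V' - W)" by (rule card_Un_le)
    also have "card (insert v N) \<le> Suc (card N)" using less.prems(2) unfolding N_def by (simp add: card_insert_if)
    also have "Suc (card N) \<le> d0" using v unfolding N_def by simp
    finally have "card (V - W) \<le> d0 + (d0 + 1) * (m - 1)" using W(3) by simp
    also have "\<dots> \<le> (d0 + 1) * m" using m1 by (cases m) auto
    finally show ?thesis using W V'_def by blast
  qed
qed

lemma finish:
  fixes C eps c1 A K0 :: real
  assumes eps: "eps > 0" and c1: "c1 \<le> C + eps / 2" and A: "A \<ge> 0"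
    and H: "\<And>k. real k \<ge> K0 \<Longrightarrow> real (ramsey3 k) \<le> c1 * real k ^ 2 / ln (real k) + A * real k + 1"
  shows "eventually (\<lambda>k. real (ramsey3 k) \<le> (C + eps) * real k ^ 2 / ln (real k)) sequentially"
proof -
  define Z where "Z = max (max K0 3) ((4 * (A + 1) / eps) ^ 2)"
  have ev: "eventually (\<lambda>k::nat. real k \<ge> Z) sequentially"
    using eventually_ge_at_top[of "nat \<lceil>Z\<rceil>"] by eventually_elim linarith
  show ?thesis
    using ev
  proof eventually_elim
    case (elim k)
    define L where "L = ln (real k)"
    have k3: "real k \<ge> 3" using elim unfolding Z_def by simp
    have kK: "real k \<ge> K0" using elim unfolding Z_def by simp
    have Lpos: "L > 0" unfolding L_def using k3 by simp
    have sq: "sqrt (real k) \<ge> 4 * (A + 1) / eps"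
    proof -
      have "(4 * (A + 1) / eps) ^ 2 \<le> real k" using elim unfolding Z_def by simp
      then have "sqrt ((4 * (A + 1) / eps) ^ 2) \<le> sqrt (real k)" by (rule real_sqrt_le_mono)
      then show ?thesis using A eps by simp
    qed
    have Lle: "L \<le> 2 * sqrt (real k)"
    proof -
      have "ln (sqrt (real k)) \<le> sqrt (real k) - 1" using k3 by (intro ln_le_minus_one) auto
      moreover have "ln (sqrt (real k)) = L / 2" unfolding L_def using k3 by (simp add: ln_sqrt)
      ultimately show ?thesis by simp
    qed
    have "L * (A + 1) * 4 \<le> 2 * sqrt (real k) * (eps * sqrt (real k))"
    proof -
      have "L * (4 * (A + 1)) \<le> (2 * sqrt (real k)) * (eps * sqrt (real k))"
      proof (rule mult_mono)
        show "4 * (A + 1) \<le> eps * sqrt (real k)" using sq eps by (simp add: field_simps)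
      qed (use Lle Lpos eps A in auto)
      then show ?thesis by (simp add: algebra_simps)
    qed
    also have "\<dots> = 2 * eps * real k" using k3 by (simp add: algebra_simps)
    finally have key: "L * (A + 1) * 4 \<le> 2 * eps * real k" .
    have "A * real k + 1 \<le> (A + 1) * real k" using k3 A by (simp add: algebra_simps)
    also have "\<dots> \<le> eps / 2 * real k ^ 2 / L"
    proof -
      have "L * (A + 1) * 4 * real k \<le> 2 * eps * real k * real k"
        by (rule mult_right_mono[OF key]) simp
      then show ?thesis using Lpos by (simp add: field_simps power2_eq_square)
    qed
    finally have a1: "A * real k + 1 \<le> eps / 2 * real k ^ 2 / L" .
    have a2: "c1 * real k ^ 2 / L \<le> (C + eps / 2) * real k ^ 2 / L"
      using c1 Lpos by (intro divide_right_mono mult_right_mono) auto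
    have "real (ramsey3 k) \<le> c1 * real k ^ 2 / L + A * real k + 1" using H[OF kK] unfolding L_def .
    also have "\<dots> \<le> (C + eps / 2) * real k ^ 2 / L + eps / 2 * real k ^ 2 / L" using a1 a2 by simp
    also have "\<dots> = (C + eps) * real k ^ 2 / L" using Lpos by (simp add: field_simps)
    finally show ?case unfolding L_def .
  qed
qed




lemma restrict_facts:
  assumes G: "sgraph V E" and tf: "triangle_free V E" and W: "W \<subseteq> V"
  defines "EW \<equiv> \<lambda>a b. E a b \<and> a \<in> W \<and> b \<in> W"
  shows "sgraph W EW" "triangle_free W EW" "\<And>J. indep_set W EW J \<Longrightarrow> indep_set V E J"
    "\<And>a. a \<in> W \<Longrightarrow> degree W EW a = card {y\<in>W. E a y}"
proof -
  have fW: "finite W" using finite_subset[OF W] G by (simp add: sgraph_def)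
  have s1: "\<forall>x y. E x y \<longrightarrow> E y x" and s2: "\<forall>x. \<not> E x x" using G unfolding sgraph_def by blast+
  show "sgraph W EW" unfolding sgraph_def
  proof (intro conjI allI impI)
    show "finite W" by (rule fW)
    fix x y assume e: "EW x y"
    then show "x \<in> W" "y \<in> W" unfolding EW_def by auto
    show "EW y x" using e s1 unfolding EW_def by blast
  next
    fix x show "\<not> EW x x" using s2 unfolding EW_def by blast
  qed
  have t0: "\<not> (\<exists>x\<in>V. \<exists>y\<in>V. \<exists>z\<in>V. E x y \<and> E y z \<and> E x z)" using tf unfolding triangle_free_def .
  show "triangle_free W EW" unfolding triangle_free_def
  proof
    assume "\<exists>x\<in>W. \<exists>y\<in>W. \<exists>z\<in>W. EW x y \<and> EW y z \<and> EW x z"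
    then obtain x y z where "x \<in> W" "y \<in> W" "z \<in> W" "E x y" "E y z" "E x z" unfolding EW_def by blast
    then show False using t0 W by blast
  qed
  show "\<And>J. indep_set W EW J \<Longrightarrow> indep_set V E J"
  proof -
    fix J assume J: "indep_set W EW J"
    then have JW: "J \<subseteq> W" and n: "\<forall>x\<in>J. \<forall>y\<in>J. \<not> EW x y" unfolding indep_set_def by auto
    show "indep_set V E J" unfolding indep_set_def
    proof (intro conjI ballI)
      show "J \<subseteq> V" using JW W by (rule subset_trans)
      fix x y assume "x \<in> J" "y \<in> J"
      then show "\<not> E x y" using n JW unfolding EW_def by blast
    qed
  qed
  show "\<And>a. a \<in> W \<Longrightarrow> degree W EW a = card {y\<in>W. E a y}"
  proof -
    fix a assume a: "a \<in> W"
    have "{y\<in>W. EW a y} = {y\<in>W. E a y}" unfolding EW_def using a by blast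
    then show "degree W EW a = card {y\<in>W. E a y}" unfolding degree_def by simp
  qed
qed

lemma from_ratio:
  fixes r \<delta> x C eps :: real and d0 :: nat
  assumes r: "r > 0" and d: "0 < \<delta>" "\<delta> < 1" and x: "0 < x" "x \<le> \<delta>" and eps: "eps > 0"
    and c1: "1 / (r * (1 - \<delta>) ^ 2) \<le> C + eps / 2"
    and Hyp: "\<And>V E. sgraph V E \<Longrightarrow> V \<noteq> {} \<Longrightarrow> triangle_free V E \<Longrightarrow> min_degree V E \<ge> d0
                 \<Longrightarrow> real (indep_number V E) \<ge> r * avg_indep V E x"
  shows "eventually (\<lambda>k. real (ramsey3 k) \<le> (C + eps) * real k ^ 2 / ln (real k)) sequentially"
proof -
  obtain K0 where K0: "\<And>k V E. real k \<ge> K0 \<Longrightarrow> sgraph V E \<and> triangle_free V E \<and> V \<noteq> {}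
      \<and> (\<forall>J. indep_set V E J \<longrightarrow> card J < k) \<and> real (indep_number V E) \<ge> r * avg_indep V E x
      \<Longrightarrow> real (card V) \<le> real k ^ 2 / (r * (1 - \<delta>) ^ 2 * ln (real k))"
    using size_bound[OF d x r] by blast
  have rd: "r * (1 - \<delta>) ^ 2 > 0" using r d by simp
  show ?thesis
  proof (rule finish[OF eps c1, of "real d0 + 1" "max K0 3"])
    fix k :: nat assume k: "max K0 3 \<le> real k"
    have lnk: "ln (real k) > 0" using k by simp
    define B where "B = real k ^ 2 / (r * (1 - \<delta>) ^ 2 * ln (real k))"
    have B0: "B \<ge> 0" unfolding B_def using rd lnk by simp
    have "real (ramsey3 k) \<le> (B + (real d0 + 1) * real k) + 1"
    proof (rule ramsey_bound)
      show "B + (real d0 + 1) * real k \<ge> 0" using B0 by simp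
    next
      fix N E assume G: "sgraph {0..<N} E" and tf: "triangle_free {0..<N} E"
        and ik: "\<forall>J. indep_set {0..<N} E J \<longrightarrow> card J < k"
      define V where "V = {0..<N}"
      have fV: "finite V" unfolding V_def by simp
      have irr: "\<forall>x. \<not> E x x" and sym: "\<forall>x y. E x y \<longrightarrow> E y x" using G unfolding sgraph_def by blast+
      have bd: "\<forall>J. indep_set V E J \<longrightarrow> card J \<le> k - 1" 
      proof (intro allI impI)
        fix J assume "indep_set V E J"
        then have "card J < k" using ik unfolding V_def by blast
        then show "card J \<le> k - 1" by linarith
      qed
      obtain W where W: "W \<subseteq> V" "\<forall>a\<in>W. d0 \<le> card {y\<in>W. E a y}" "card (V - W) \<le> (d0 + 1) * (k - 1)"
        using core[OF fV irr sym, of "k - 1" d0, OF bd] by blast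
      have cV: "card V = card W + card (V - W)"
      proof -
        have "card W \<le> card V" by (rule card_mono[OF fV W(1)])
        moreover have "card (V - W) = card V - card W" by (rule card_Diff_subset[OF finite_subset[OF W(1) fV] W(1)])
        ultimately show ?thesis by simp
      qed
      have cVW: "real (card (V - W)) \<le> (real d0 + 1) * real k"
      proof -
        have "(d0 + 1) * (k - 1) \<le> (d0 + 1) * k" by (rule mult_le_mono2) simp
        then have "card (V - W) \<le> (d0 + 1) * k" using W(3) by linarith
        then have "real (card (V - W)) \<le> real ((d0 + 1) * k)" by (rule of_nat_mono)
        then show ?thesis by (simp add: algebra_simps)
      qed
      have cW: "real (card W) \<le> B"
      proof (cases "W = {}")
        case True then show ?thesis using B0 by simp
      next
        case False
        define EW where "EW = (\<lambda>a b. E a b \<and> a \<in> W \<and> b \<in> W)"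
        have GV: "sgraph V E" "triangle_free V E" using G tf unfolding V_def by simp_all
        note RF = restrict_facts[OF GV W(1), folded EW_def]
        have md: "min_degree W EW \<ge> d0"
        proof -
          have fW: "finite W" using W(1) fV by (rule finite_subset)
          have "\<forall>a\<in>degree W EW ` W. d0 \<le> a" using W(2) RF(4) by simp
          then show ?thesis unfolding min_degree_def using fW False by (simp add: Min_ge_iff)
        qed
        have ind: "\<forall>J. indep_set W EW J \<longrightarrow> card J < k" using RF(3) ik unfolding V_def by blast
        have "real (indep_number W EW) \<ge> r * avg_indep W EW x" using Hyp[OF RF(1) False RF(2) md] .
        moreover have "real k \<ge> K0" using k by simp
        ultimately have "real (card W) \<le> real k ^ 2 / (r * (1 - \<delta>) ^ 2 * ln (real k))"
          using K0[of k W EW] RF(1) RF(2) False ind by blast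
        then show ?thesis unfolding B_def .
      qed
      show "real N \<le> B + (real d0 + 1) * real k" using cV cW cVW unfolding V_def by simp
    qed
    then show "real (ramsey3 k) \<le> 1 / (r * (1 - \<delta>) ^ 2) * real k ^ 2 / ln (real k) + (real d0 + 1) * real k + 1"
      unfolding B_def by simp
  qed simp
qed




lemma ratio_to:
  assumes G: "sgraph V E" and Vne: "V \<noteq> {}" and x: "0 < x" "x \<le> lam" and r: "r \<ge> 0"
    and h: "real (indep_number V E) / avg_indep V E lam \<ge> r"
  shows "real (indep_number V E) \<ge> r * avg_indep V E x"
proof -
  have lpos: "lam > 0" using x by simp
  have ap: "avg_indep V E lam > 0" by (rule avg_pos[OF G Vne lpos])
  have "r * avg_indep V E lam \<le> real (indep_number V E)" using h ap by (simp add: le_divide_eq)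
  moreover have "r * avg_indep V E x \<le> r * avg_indep V E lam"
    using avg_mono[OF G x] r by (intro mult_left_mono) auto
  ultimately show ?thesis by simp
qed

theorem lemma5p5:
  shows
  "((\<forall>V E. sgraph V E \<and> V \<noteq> {} \<and> triangle_free V E \<longrightarrow>
          real (indep_number V E) / avg_indep V E 1 \<ge> 4/3)
     \<longrightarrow> (\<forall>eps>0. eventually (\<lambda>k. real (ramsey3 k) \<le> (3/4 + eps) * real k ^ 2 / ln (real k)) sequentially))
   \<and> ((\<exists>eta :: nat \<Rightarrow> real. eta \<longlonglongrightarrow> 0 \<and>
          (\<forall>d V E. sgraph V E \<and> V \<noteq> {} \<and> triangle_free V E \<and> min_degree V E = d \<longrightarrow>
             real (indep_number V E) / avg_indep V E 1 \<ge> 2 - eta d))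
     \<longrightarrow> (\<forall>eps>0. eventually (\<lambda>k. real (ramsey3 k) \<le> (1/2 + eps) * real k ^ 2 / ln (real k)) sequentially))
   \<and> ((\<forall>eps>0. \<exists>lam>0. \<forall>V E. sgraph V E \<and> V \<noteq> {} \<and> triangle_free V E \<longrightarrow>
          real (indep_number V E) / avg_indep V E lam \<ge> 2 - eps)
     \<longrightarrow> (\<forall>eps>0. eventually (\<lambda>k. real (ramsey3 k) \<le> (1/2 + eps) * real k ^ 2 / ln (real k)) sequentially))"
proof (intro conjI impI allI)
  fix eps :: real
  assume H1: "\<forall>V E. sgraph V E \<and> V \<noteq> {} \<and> triangle_free V E \<longrightarrow>
          real (indep_number V E) / avg_indep V E 1 \<ge> 4/3" and eps: "eps > 0"
  define \<delta> where "\<delta> = min (1/6) (eps / 9)"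
  have d: "0 < \<delta>" "\<delta> < 1" "\<delta> \<le> 1/6" "\<delta> \<le> eps / 9" using eps unfolding \<delta>_def by auto
  show "eventually (\<lambda>k. real (ramsey3 k) \<le> (3/4 + eps) * real k ^ 2 / ln (real k)) sequentially"
  proof (rule from_ratio[of "4/3" \<delta> \<delta> eps "3/4" 0])
    have "1 / (4 / 3 * (1 - \<delta>) ^ 2) = 3/4 * (1 / (1 - \<delta>) ^ 2)" by simp
    also have "\<dots> \<le> 3/4 * (1 + 6 * \<delta>)" using arith1[OF d(1) d(3)] by simp
    also have "\<dots> \<le> 3/4 + eps / 2" using d(4) by simp
    finally show "1 / (4 / 3 * (1 - \<delta>) ^ 2) \<le> 3 / 4 + eps / 2" .
  next
    fix V E assume "sgraph V E" "V \<noteq> {}" "triangle_free V E"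
    then show "4 / 3 * avg_indep V E \<delta> \<le> real (indep_number V E)"
      using H1 d by (intro ratio_to[where lam = 1]) auto
  qed (use d eps in auto)
next
  fix eps :: real
  assume H2: "\<exists>eta :: nat \<Rightarrow> real. eta \<longlonglongrightarrow> 0 \<and>
          (\<forall>d V E. sgraph V E \<and> V \<noteq> {} \<and> triangle_free V E \<and> min_degree V E = d \<longrightarrow>
             real (indep_number V E) / avg_indep V E 1 \<ge> 2 - eta d)" and eps: "eps > 0"
  obtain eta :: "nat \<Rightarrow> real" where lim: "eta \<longlonglongrightarrow> 0" and
    he: "\<And>d V E. sgraph V E \<and> V \<noteq> {} \<and> triangle_free V E \<and> min_degree V E = d \<Longrightarrow>
             real (indep_number V E) / avg_indep V E 1 \<ge> 2 - eta d" using H2 by blast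
  define \<delta> where "\<delta> = min (1/6) (eps / 9)"
  have d: "0 < \<delta>" "\<delta> < 1" "\<delta> \<le> 1/6" "\<delta> \<le> eps / 9" using eps unfolding \<delta>_def by auto
  have "eventually (\<lambda>n. eta n < \<delta>) sequentially" using order_tendstoD(2)[OF lim] d by simp
  then obtain d0 where d0: "\<And>n. n \<ge> d0 \<Longrightarrow> eta n < \<delta>" unfolding eventually_sequentially by blast
  show "eventually (\<lambda>k. real (ramsey3 k) \<le> (1/2 + eps) * real k ^ 2 / ln (real k)) sequentially"
  proof (rule from_ratio[of "2 - \<delta>" \<delta> \<delta> eps "1/2" d0])
    have "1 / ((2 - \<delta>) * (1 - \<delta>) ^ 2) \<le> 1/2 + 3 * \<delta>" by (rule arith2[OF d(1) d(3)])
    also have "\<dots> \<le> 1/2 + eps / 2" using d(4) eps by simp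
    finally show "1 / ((2 - \<delta>) * (1 - \<delta>) ^ 2) \<le> 1 / 2 + eps / 2" .
  next
    fix V E assume G: "sgraph V E" "V \<noteq> {}" "triangle_free V E" "d0 \<le> min_degree V E"
    have "real (indep_number V E) / avg_indep V E 1 \<ge> 2 - eta (min_degree V E)" using he G by blast
    moreover have "2 - eta (min_degree V E) \<ge> 2 - \<delta>" using d0[OF G(4)] by simp
    ultimately have "real (indep_number V E) / avg_indep V E 1 \<ge> 2 - \<delta>" by linarith
    then show "(2 - \<delta>) * avg_indep V E \<delta> \<le> real (indep_number V E)"
      using G d by (intro ratio_to[where lam = 1]) auto
  qed (use d eps in auto)
next
  fix eps :: real
  assume H3: "\<forall>eps>0. \<exists>lam>0. \<forall>V E. sgraph V E \<and> V \<noteq> {} \<and> triangle_free V E \<longrightarrow>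
          real (indep_number V E) / avg_indep V E lam \<ge> 2 - eps" and eps: "eps > 0"
  define \<delta> where "\<delta> = min (1/6) (eps / 9)"
  have d: "0 < \<delta>" "\<delta> < 1" "\<delta> \<le> 1/6" "\<delta> \<le> eps / 9" using eps unfolding \<delta>_def by auto
  obtain lam where lam: "lam > 0" and hl: "\<And>V E. sgraph V E \<and> V \<noteq> {} \<and> triangle_free V E \<Longrightarrow>
          real (indep_number V E) / avg_indep V E lam \<ge> 2 - \<delta>" using H3 d(1) by blast
  define x where "x = min lam \<delta>"
  have x: "0 < x" "x \<le> \<delta>" "x \<le> lam" using lam d unfolding x_def by auto
  show "eventually (\<lambda>k. real (ramsey3 k) \<le> (1/2 + eps) * real k ^ 2 / ln (real k)) sequentially"
  proof (rule from_ratio[of "2 - \<delta>" \<delta> x eps "1/2" 0])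
    have "1 / ((2 - \<delta>) * (1 - \<delta>) ^ 2) \<le> 1/2 + 3 * \<delta>" by (rule arith2[OF d(1) d(3)])
    also have "\<dots> \<le> 1/2 + eps / 2" using d(4) eps by simp
    finally show "1 / ((2 - \<delta>) * (1 - \<delta>) ^ 2) \<le> 1 / 2 + eps / 2" .
  next
    fix V E assume G: "sgraph V E" "V \<noteq> {}" "triangle_free V E"
    then show "(2 - \<delta>) * avg_indep V E x \<le> real (indep_number V E)"
      using hl[of V E] d x by (intro ratio_to[where lam = lam]) auto
  qed (use d eps x in auto)
qed



end
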